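(* Let $k>1$, let $f$ be a positive function, differentiable on $[0,1]$, and define $g(R)=\dfrac{k-1}{\frac{k-1}{k}-R}$ for $R\neq\frac{k-1}{k}$. Consider the planar system $$\frac{dI}{d\tau}=I\,[f(R)(1-I-R)-k],\qquad \frac{dR}{d\tau}=(k-1)I-R,$$ and let $(I^*,R^* )$ be an endemic equilibrium of it such that $\frac{df}{dR}(R^* )\neq\frac{dg}{dR}(R^* )$. Then either $(I^*,R^* )$ is locally stable, or there exists another endemic equilibrium point $(\overline{I}^*,\overline{R}^* )$ with $\overline{R}^*>R^*$.
   Context: An endemic equilibrium is an equilibrium point $(I^*,R^* )$ of the system with $I^*>0$. "Locally stable" means locally asymptotically stable (both eigenvalues of the Jacobian at the point have negative real part). *)

theory Defs
  imports "HOL-Analysis.Analysis"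
begin

definition rhsI :: "(real \<Rightarrow> real) \<Rightarrow> real \<Rightarrow> real \<Rightarrow> real \<Rightarrow> real" where
  "rhsI f k I R = I * (f R * (1 - I - R) - k)"

definition rhsR :: "real \<Rightarrow> real \<Rightarrow> real \<Rightarrow> real" where
  "rhsR k I R = (k - 1) * I - R"

definition gfun :: "real \<Rightarrow> real \<Rightarrow> real" where
  "gfun k R = (k - 1) / ((k - 1) / k - R)"

text \<open>Endemic equilibrium: an equilibrium with I > 0 (R in the domain [0,1] of f).\<close>
definition endemic_eq :: "(real \<Rightarrow> real) \<Rightarrow> real \<Rightarrow> real \<Rightarrow> real \<Rightarrow> bool" where
  "endemic_eq f k I R \<longleftrightarrow> R \<in> {0..1} \<and> I > 0 \<and> rhsI f k I R = 0 \<and> rhsR k I R = 0"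

definition jac11 :: "(real \<Rightarrow> real) \<Rightarrow> real \<Rightarrow> real \<Rightarrow> real \<Rightarrow> real" where
  "jac11 f k I R = deriv (\<lambda>x. rhsI f k x R) I"
definition jac12 :: "(real \<Rightarrow> real) \<Rightarrow> real \<Rightarrow> real \<Rightarrow> real \<Rightarrow> real" where
  "jac12 f k I R = deriv (\<lambda>y. rhsI f k I y) R"
definition jac21 :: "real \<Rightarrow> real \<Rightarrow> real \<Rightarrow> real" where
  "jac21 k I R = deriv (\<lambda>x. rhsR k x R) I"
definition jac22 :: "real \<Rightarrow> real \<Rightarrow> real \<Rightarrow> real" where
  "jac22 k I R = deriv (\<lambda>y. rhsR k I y) R"

definition jac_eigenvalue :: "(real \<Rightarrow> real) \<Rightarrow> real \<Rightarrow> real \<Rightarrow> real \<Rightarrow> complex \<Rightarrow> bool" where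
  "jac_eigenvalue f k I R \<mu> \<longleftrightarrow>
     (of_real (jac11 f k I R) - \<mu>) * (of_real (jac22 k I R) - \<mu>)
       - of_real (jac12 f k I R) * of_real (jac21 k I R) = 0"

definition locally_stable :: "(real \<Rightarrow> real) \<Rightarrow> real \<Rightarrow> real \<Rightarrow> real \<Rightarrow> bool" where
  "locally_stable f k I R \<longleftrightarrow> (\<forall>\<mu>. jac_eigenvalue f k I R \<mu> \<longrightarrow> Re \<mu> < 0)"

end

theory Submission
  imports Defs
begin

lemma eig_neg:
  fixes a b c d :: real and \<mu> :: complex
  assumes "a + d < 0" "a * d - b * c > 0"
    and e: "(of_real a - \<mu>) * (of_real d - \<mu>) - of_real b * of_real c = 0"
  shows "Re \<mu> < 0"
proof -
  obtain x y where mu: "\<mu> = Complex x y" by (cases \<mu>)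
  have "Re ((of_real a - \<mu>) * (of_real d - \<mu>) - of_real b * of_real c) = 0" using e by simp
  then have re: "(a - x) * (d - x) - y * y - b * c = 0"
    by (simp add: mu)
  have "Im ((of_real a - \<mu>) * (of_real d - \<mu>) - of_real b * of_real c) = 0" using e by simp
  then have im: "- (a - x) * y - y * (d - x) = 0"
    by (simp add: mu algebra_simps)
  show ?thesis
  proof (cases "y = 0")
    case True
    with re have "x * x - (a + d) * x + (a * d - b * c) = 0" by (simp add: algebra_simps)
    moreover have "x \<ge> 0 \<Longrightarrow> x * x - (a + d) * x \<ge> 0"
      using assms(1) by (smt (verit) mult_nonneg_nonneg mult_nonpos_nonneg)
    ultimately show ?thesis using assms(2) mu by force
  next
    case False
    from im have "y * (2 * x - (a + d)) = 0" by (simp add: algebra_simps)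
    with False have "x = (a + d) / 2" by simp
    thus ?thesis using assms(1) mu by simp
  qed
qed

theorem proposition1:
  fixes f :: "real \<Rightarrow> real" and k Is Rs :: real
  assumes "k > 1"
    and "\<forall>x\<in>{0..1}. f x > 0"
    and "f differentiable_on {0..1}"
    and "endemic_eq f k Is Rs"
    and "deriv f Rs \<noteq> deriv (gfun k) Rs"
  shows "locally_stable f k Is Rs \<or>
         (\<exists>Ib Rb. endemic_eq f k Ib Rb \<and> Rb > Rs)"
proof -
  define c where "c = (k - 1) / k"
  have k0: "k > 0" "k - 1 > 0" using assms(1) by auto
  have c1: "c < 1" "c > 0" using k0 by (auto simp: c_def field_simps)
  from assms(4) have R01: "Rs \<in> {0..1}" and I0: "Is > 0"
    and eqI: "Is * (f Rs * (1 - Is - Rs) - k) = 0" and eqR: "(k - 1) * Is - Rs = 0"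
    by (auto simp: endemic_eq_def rhsI_def rhsR_def)
  have Rs0: "Rs > 0" using eqR I0 k0 by (smt (verit) mult_pos_pos)
  have fRs: "f Rs > 0" using assms(2) R01 by auto
  have eqF: "f Rs * (1 - Is - Rs) = k" using eqI I0 by simp
  define L where "L = 1 - Is - Rs"
  have L0: "L > 0" using eqF fRs k0 unfolding L_def
    by (metis zero_less_mult_pos)
  have IsR: "Is = Rs / (k - 1)" using eqR k0 by (simp add: field_simps)
  have Lc: "L = k * (c - Rs) / (k - 1)" unfolding L_def IsR c_def using k0
    by (simp add: field_simps)
  have Rsc: "Rs < c" using Lc L0 k0 by (smt (verit) divide_pos_pos mult_pos_pos zero_less_mult_pos divide_nonpos_pos mult_nonneg_nonpos)
  have fL: "f Rs = k / L" using eqF L0 unfolding L_def by (simp add: field_simps)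
  have cR: "c - Rs = (k - 1) * L / k" using Lc k0 by (simp add: field_simps)
  define D where "D = deriv f Rs"
  have "f differentiable (at Rs within {0..1})" using assms(3) R01 differentiable_on_def by blast
  moreover have "Rs \<in> interior {0..1}" using Rs0 Rsc c1 by simp
  ultimately have "f differentiable (at Rs)" by (metis at_within_interior)
  then have fd: "(f has_real_derivative D) (at Rs)"
    unfolding D_def by (simp add: DERIV_deriv_iff_real_differentiable)
  have gk: "gfun k = (\<lambda>R. (k - 1) / (c - R))" by (auto simp: gfun_def c_def fun_eq_iff)
  define G where "G = (k - 1) / (c - Rs)^2"
  have gd: "(gfun k has_real_derivative G) (at Rs)"
    unfolding gk G_def using Rsc
    by (auto intro!: derivative_eq_intros simp: power2_eq_square)
  have aux: "m / ((m * L / k)^2) = (k / L)^2 / m" if "m > 0" "L > 0" "k > 0" for m L k :: real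
    using that by (simp add: field_simps power2_eq_square)
  have G: "G = (f Rs)^2 / (k - 1)" unfolding G_def cR fL using k0 L0 aux by simp
  have DG: "D \<noteq> G" using assms(5) DERIV_imp_deriv[OF gd] unfolding D_def by simp
  have j11: "jac11 f k Is Rs = f Rs * (1 - Is - Rs) - k - Is * f Rs"
    unfolding jac11_def rhsI_def
    by (rule DERIV_imp_deriv) (auto intro!: derivative_eq_intros simp: algebra_simps)
  have j12: "jac12 f k Is Rs = Is * (D * (1 - Is - Rs) - f Rs)"
    unfolding jac12_def rhsI_def
    by (rule DERIV_imp_deriv) (auto intro!: derivative_eq_intros fd simp: algebra_simps)
  have j21: "jac21 k Is Rs = k - 1"
    unfolding jac21_def rhsR_def
    by (rule DERIV_imp_deriv) (auto intro!: derivative_eq_intros)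
  have j22: "jac22 k Is Rs = - 1"
    unfolding jac22_def rhsR_def
    by (rule DERIV_imp_deriv) (auto intro!: derivative_eq_intros)
  show ?thesis
  proof (cases "D < G")
    case True
    have "locally_stable f k Is Rs"
      unfolding locally_stable_def jac_eigenvalue_def
    proof (intro allI impI)
      fix \<mu> assume e: "(complex_of_real (jac11 f k Is Rs) - \<mu>) * (complex_of_real (jac22 k Is Rs) - \<mu>) -
         complex_of_real (jac12 f k Is Rs) * complex_of_real (jac21 k Is Rs) = 0"
      have tr: "jac11 f k Is Rs + jac22 k Is Rs < 0"
        unfolding j11 j22 using eqF mult_pos_pos[OF I0 fRs] by simp
      have "(k - 1) * D < (f Rs)^2" using True G k0 by (simp add: field_simps)
      then have "(k - 1) * D * L < (f Rs)^2 * L" using L0 by simp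
      also have "\<dots> = f Rs * k" using eqF unfolding L_def by (simp add: power2_eq_square)
      finally have "0 < k * f Rs - (k - 1) * D * L" by (simp add: mult.commute)
      then have "0 < Is * (k * f Rs - (k - 1) * D * L)" using I0 by simp
      moreover have "jac11 f k Is Rs * jac22 k Is Rs - jac12 f k Is Rs * jac21 k Is Rs
          = Is * (k * f Rs - (k - 1) * D * L)"
        unfolding j11 j22 j12 j21 eqF L_def by (simp add: algebra_simps)
      ultimately have det: "jac11 f k Is Rs * jac22 k Is Rs - jac12 f k Is Rs * jac21 k Is Rs > 0" by simp
      show "Re \<mu> < 0" by (rule eig_neg[OF tr det e])
    qed
    then show ?thesis by simp
  next
    case False
    with DG have GD: "G < D" by simp
    define h where "h = (\<lambda>x. f x - (k - 1) / (c - x))"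
    have hd: "(h has_real_derivative (D - G)) (at Rs)"
      using DERIV_diff[OF fd gd[unfolded gk]] unfolding h_def by simp
    have h0: "h Rs = 0" unfolding h_def cR fL using k0 L0 by simp
    obtain d where d: "d > 0" "\<And>e. e > 0 \<Longrightarrow> e < d \<Longrightarrow> h Rs < h (Rs + e)"
      using DERIV_pos_inc_right[OF hd] GD by auto
    define R1 where "R1 = Rs + min (d / 2) ((c - Rs) / 2)"
    have R1: "Rs < R1" "R1 < c" using d(1) Rsc unfolding R1_def min_def by (auto simp: field_simps)
    have hR1: "h R1 > 0" using d(2)[of "min (d / 2) ((c - Rs) / 2)"] d Rsc h0 unfolding R1_def by auto
    have fc: "continuous_on {0..1} f" using assms(3) by (rule differentiable_imp_continuous_on)
    obtain xm where xm: "xm \<in> {0..1}" "\<And>y. y \<in> {0..1} \<Longrightarrow> f y \<le> f xm"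
      using continuous_attains_sup[OF compact_Icc _ fc] by auto
    define M where "M = f xm"
    have M0: "M > 0" using assms(2) xm unfolding M_def by auto
    define eps where "eps = min ((c - R1) / 2) ((k - 1) / (M + 1))"
    have eps0: "eps > 0" using R1 M0 k0 unfolding eps_def by auto
    define Rb0 where "Rb0 = c - eps"
    have Rb0: "R1 < Rb0" "Rb0 < c" proof -
      have "eps \<le> (c - R1) / 2" unfolding eps_def by (rule min.cobounded1)
      then show "R1 < Rb0" "Rb0 < c" using eps0 R1 unfolding Rb0_def by auto
    qed
    have "eps \<le> (k - 1) / (M + 1)" unfolding eps_def by (rule min.cobounded2)
    then have "eps * (M + 1) \<le> (k - 1) / (M + 1) * (M + 1)"
      by (rule mult_right_mono) (use M0 in simp)
    then have "eps * (M + 1) \<le> k - 1" using M0 by simp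
    then have "M + 1 \<le> (k - 1) / eps" using eps0 by (simp add: field_simps)
    moreover have "f Rb0 \<le> M" unfolding M_def using xm Rb0 R1 Rs0 c1 by auto
    ultimately have hRb0: "h Rb0 < 0" unfolding h_def Rb0_def by simp
    have fc1: "continuous_on {R1..Rb0} f" using fc by (rule continuous_on_subset) (use R1 Rb0 Rs0 c1 in auto)
    have gc1: "continuous_on {R1..Rb0} (\<lambda>x. (k - 1) / (c - x))"
      by (intro continuous_intros) (use Rb0 in auto)
    have "continuous_on {R1..Rb0} h"
      unfolding h_def by (intro continuous_on_diff fc1 gc1)
    then obtain Rb where Rb: "R1 \<le> Rb" "Rb \<le> Rb0" "h Rb = 0"
      using IVT2'[of h Rb0 0 R1] hRb0 hR1 Rb0 by auto
    have Rbc: "Rb < c" "Rs < Rb" "0 < Rb" using Rb Rb0 R1 Rs0 by auto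
    have fRb: "f Rb = (k - 1) / (c - Rb)" using Rb(3) unfolding h_def by simp
    have "endemic_eq f k (Rb / (k - 1)) Rb"
      unfolding endemic_eq_def rhsI_def rhsR_def
    proof (intro conjI)
      show "Rb \<in> {0..1}" using Rbc c1 by auto
      show "0 < Rb / (k - 1)" using Rbc k0 by simp
      have "1 - Rb / (k - 1) - Rb = k * (c - Rb) / (k - 1)" unfolding c_def using k0
        by (simp add: field_simps)
      then have "f Rb * (1 - Rb / (k - 1) - Rb) = k" unfolding fRb using k0 Rbc by simp
      then show "Rb / (k - 1) * (f Rb * (1 - Rb / (k - 1) - Rb) - k) = 0" by simp
      show "(k - 1) * (Rb / (k - 1)) - Rb = 0" using k0 by simp
    qed
    then show ?thesis using Rbc by blast
  qed
qed

end
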